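(* Let $I\subseteq\mathbb{R}$ be a closed, non-degenerate (possibly unbounded) interval and let $\mu$ be a continuous Borel probability measure on $\mathbb{R}$. Then $$1-\mu(I)=\inf\{d_{Ku}(\mu,\vartheta) : \vartheta\in P_c(\mathbb{R}),\ S_\vartheta\subseteq I\}.$$ Furthermore, if $\mu\in P_{ac}(\mathbb{R})$, then $$1-\mu(I)=\inf\{d_{Ku}(\mu,\vartheta) : \vartheta\in P_{ac}(\mathbb{R}),\ S_\vartheta\subseteq I\}.$$
   Context: $P_c(\mathbb{R})$ denotes the continuous (atomless) Borel probability measures on $\mathbb{R}$ and $P_{ac}(\mathbb{R})$ those absolutely continuous with respect to Lebesgue measure. $S_\vartheta$ is the closed support of $\vartheta$ (smallest closed set of full measure). The Kuiper distance is $d_{Ku}(\mu,\nu)=\sup\{|\mu(J)-\nu(J)| : J\text{ a non-degenerate interval of }\mathbb{R}\}$, equivalently $\sup_t(f_\mu(t)-f_\nu(t))+\sup_t(f_\nu(t)-f_\mu(t))$ with $f_\mu(t)=\mu((-\infty,t])$. *)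

theory Defs
  imports "HOL-Probability.Probability"
begin

definition Pc :: "real measure set" where
  "Pc = {M. prob_space M \<and> sets M = sets borel \<and> (\<forall>x. emeasure M {x} = 0)}"

definition Pac :: "real measure set" where
  "Pac = {M. prob_space M \<and> sets M = sets borel \<and> absolutely_continuous lborel M}"

definition supp :: "real measure \<Rightarrow> real set" where
  "supp M = \<Inter>{C. closed C \<and> emeasure M (UNIV - C) = 0}"

definition nondeg_interval :: "real set \<Rightarrow> bool" where
  "nondeg_interval J \<longleftrightarrow> is_interval J \<and> (\<exists>a\<in>J. \<exists>b\<in>J. a < b)"

definition d_Ku :: "real measure \<Rightarrow> real measure \<Rightarrow> real" where
  "d_Ku \<mu> \<nu> = Sup {\<bar>measure \<mu> J - measure \<nu> J\<bar> | J. nondeg_interval J}"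

end

theory Submission
  imports Defs
begin

lemma supp_null:
  assumes "sets M = sets (borel :: real measure)"
  shows "emeasure M (UNIV - supp M) = 0"
proof -
  define F where "F = {UNIV - C | C. closed C \<and> emeasure M (UNIV - C) = 0}"
  have eq: "UNIV - supp M = \<Union>F" unfolding F_def supp_def by blast
  have "\<And>S. S \<in> F \<Longrightarrow> open S" unfolding F_def by auto
  then obtain F' where F': "F' \<subseteq> F" "countable F'" "\<Union>F' = \<Union>F"
    by (rule Lindelof) blast
  have "\<And>S. S \<in> F' \<Longrightarrow> S \<in> null_sets M"
  proof -
    fix S assume "S \<in> F'"
    with F' obtain C where "S = UNIV - C" "closed C" "emeasure M (UNIV - C) = 0"
      unfolding F_def by blast
    moreover have "UNIV - C \<in> sets M" using assms \<open>closed C\<close> by auto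
    ultimately show "S \<in> null_sets M" by auto
  qed
  then have "(\<Union>S\<in>F'. S) \<in> null_sets M" by (intro null_sets_UN') (use F' in auto)
  then show ?thesis using eq F' by auto
qed

lemma supp_sub:
  assumes "closed I" "emeasure M (UNIV - I) = 0"
  shows "supp M \<subseteq> I"
  using assms unfolding supp_def by blast

lemma dku_bdd:
  assumes "prob_space \<mu>" "prob_space \<nu>"
  shows "bdd_above {\<bar>measure \<mu> J - measure \<nu> J\<bar> | J. nondeg_interval J}"
proof -
  have "\<And>J. \<bar>measure \<mu> J - measure \<nu> J\<bar> \<le> 1"
    using prob_space.prob_le_1[OF assms(1)] prob_space.prob_le_1[OF assms(2)]
    by (smt (verit) measure_nonneg)
  then show ?thesis by (auto intro!: bdd_aboveI)
qed

lemma dku_ge: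
  assumes "prob_space \<mu>" "prob_space \<nu>" "nondeg_interval J"
  shows "\<bar>measure \<mu> J - measure \<nu> J\<bar> \<le> d_Ku \<mu> \<nu>"
  unfolding d_Ku_def using assms by (intro cSup_upper dku_bdd) auto

lemma dku_le:
  assumes "\<And>J. nondeg_interval J \<Longrightarrow> \<bar>measure \<mu> J - measure \<nu> J\<bar> \<le> c"
  shows "d_Ku \<mu> \<nu> \<le> c"
proof -
  have "nondeg_interval UNIV" unfolding nondeg_interval_def
    by (auto intro!: bexI[of _ 0] bexI[of _ 1])
  then show ?thesis unfolding d_Ku_def using assms by (intro cSup_least) auto
qed

lemma case_zero:
  assumes "nondeg_interval I" "\<mu> \<in> Pc" "measure \<mu> I = 0" "closed I"
  shows "\<exists>\<nu>. \<nu> \<in> Pac \<and> \<nu> \<in> Pc \<and> supp \<nu> \<subseteq> I \<and> d_Ku \<mu> \<nu> \<le> 1 - measure \<mu> I"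
proof -
  obtain a b where ab: "a \<in> I" "b \<in> I" "a < b" using assms(1) unfolding nondeg_interval_def by blast
  have sub: "{a..b} \<subseteq> I" using assms(1) ab unfolding nondeg_interval_def
    by (metis atLeastAtMost_iff is_interval_1 subsetI)
  define \<nu> where "\<nu> = uniform_measure lborel {a..b}"
  have em: "emeasure lborel {a..b} = ennreal (b - a)" using ab by simp
  have ps: "prob_space \<nu>" unfolding \<nu>_def using ab em by (intro prob_space_uniform_measure) auto
  have st: "sets \<nu> = sets borel" unfolding \<nu>_def by simp
  have nul: "emeasure \<nu> N = 0" if "N \<in> null_sets lborel" for N
  proof -
    have "N \<in> sets borel" using that by auto
    then have "emeasure \<nu> N = emeasure lborel ({a..b} \<inter> N) / emeasure lborel {a..b}"
      unfolding \<nu>_def by (intro emeasure_uniform_measure) auto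
    also have "emeasure lborel ({a..b} \<inter> N) = 0"
      using null_set_Int1[OF that, of "{a..b}"] by auto
    finally show ?thesis by simp
  qed
  have pac: "\<nu> \<in> Pac" unfolding Pac_def absolutely_continuous_def using ps st nul
    by (auto simp: null_sets_def)
  have pc: "\<nu> \<in> Pc" unfolding Pc_def using ps st nul[of "{_}"] by (auto simp: null_sets_def)
  have "emeasure \<nu> (UNIV - I) = emeasure lborel ({a..b} \<inter> (UNIV - I)) / emeasure lborel {a..b}"
    unfolding \<nu>_def using assms(4) by (intro emeasure_uniform_measure) auto
  also have "{a..b} \<inter> (UNIV - I) = {}" using sub by blast
  finally have "emeasure \<nu> (UNIV - I) = 0" by simp
  then have sp: "supp \<nu> \<subseteq> I" by (rule supp_sub[OF assms(4)])
  have pmu: "prob_space \<mu>" using assms(2) unfolding Pc_def by auto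
  have "d_Ku \<mu> \<nu> \<le> 1"
    using prob_space.prob_le_1[OF pmu] prob_space.prob_le_1[OF ps]
    by (intro dku_le) (smt (verit) measure_nonneg)
  then show ?thesis using pac pc sp assms(3) by auto
qed


lemma real_ineq:
  fixes x y p :: real
  assumes "0 \<le> x" "x \<le> p" "0 \<le> y" "y \<le> 1 - p" "0 < p" "p \<le> 1"
  shows "\<bar>(x + y) - x / p\<bar> \<le> 1 - p"
proof -
  have q: "x / p \<le> 1" "0 \<le> x / p" using assms by auto
  have "x / p - x = (x / p) * (1 - p)" using assms by (simp add: field_simps)
  also have "\<dots> \<le> 1 * (1 - p)" by (rule mult_right_mono) (use q assms in auto)
  also have "\<dots> = 1 - p" by simp
  finally have a: "x / p - x \<le> 1 - p" .
  have b: "0 \<le> (x / p) * (1 - p)" using q assms by simp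
  show ?thesis using a b \<open>x / p - x = _\<close> assms by linarith
qed

lemma case_pos:
  assumes "\<mu> \<in> Pc" "measure \<mu> I > 0" "closed I"
  shows "\<exists>\<nu>. (\<mu> \<in> Pac \<longrightarrow> \<nu> \<in> Pac) \<and> \<nu> \<in> Pc \<and> supp \<nu> \<subseteq> I \<and> d_Ku \<mu> \<nu> \<le> 1 - measure \<mu> I"
proof -
  define p where "p = measure \<mu> I"
  have pmu: "prob_space \<mu>" and smu: "sets \<mu> = sets borel" and pts: "\<And>x. emeasure \<mu> {x} = 0"
    using assms(1) unfolding Pc_def by auto
  interpret prob_space \<mu> by (rule pmu)
  have spc: "space \<mu> = UNIV" using sets_eq_imp_space_eq[OF smu] by simp
  have Is: "I \<in> sets \<mu>" using smu assms(3) by auto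
  have emI: "emeasure \<mu> I = ennreal p" unfolding p_def by (simp add: emeasure_eq_measure)
  have p0: "p > 0" "p \<le> 1" using assms(2) unfolding p_def by auto
  have A: "emeasure \<mu> I \<noteq> 0" "emeasure \<mu> I \<noteq> \<infinity>" using emI p0 by auto
  define \<nu> where "\<nu> = uniform_measure \<mu> I"
  have ps: "prob_space \<nu>" unfolding \<nu>_def using A by (rule prob_space_uniform_measure)
  have st: "sets \<nu> = sets borel" unfolding \<nu>_def using smu by simp
  have em\<nu>: "emeasure \<nu> B = emeasure \<mu> (I \<inter> B) / emeasure \<mu> I" if "B \<in> sets borel" for B
    unfolding \<nu>_def using Is that smu by (intro emeasure_uniform_measure) auto
  have me\<nu>: "measure \<nu> B = measure \<mu> (I \<inter> B) / p" if "B \<in> sets borel" for B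
    unfolding \<nu>_def p_def using A that smu by (intro measure_uniform_measure) auto
  have "emeasure \<nu> {x} = 0" for x
  proof -
    have "emeasure \<mu> (I \<inter> {x}) \<le> emeasure \<mu> {x}" by (intro emeasure_mono) (auto simp: smu)
    then have "emeasure \<mu> (I \<inter> {x}) = 0" using pts by simp
    then show ?thesis using em\<nu>[of "{x}"] by simp
  qed
  then have pc: "\<nu> \<in> Pc" unfolding Pc_def using ps st by auto
  have pac: "\<nu> \<in> Pac" if "\<mu> \<in> Pac"
  proof -
    have ac: "null_sets lborel \<subseteq> null_sets \<mu>" using that unfolding Pac_def absolutely_continuous_def by auto
    have "N \<in> null_sets \<nu>" if N: "N \<in> null_sets lborel" for N
    proof -
      have "N \<in> null_sets \<mu>" using ac N by auto
      then have "I \<inter> N \<in> null_sets \<mu>" using null_set_Int1 Is by blast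
      moreover have "N \<in> sets borel" using N by auto
      moreover have "emeasure \<mu> (I \<inter> N) = 0" using \<open>I \<inter> N \<in> null_sets \<mu>\<close> by (rule null_setsD1)
      ultimately have "emeasure \<nu> N = 0" using em\<nu>[of N] by simp
      then show ?thesis using st \<open>N \<in> sets borel\<close> by (auto simp: null_sets_def)
    qed
    then show ?thesis unfolding Pac_def absolutely_continuous_def using ps st by auto
  qed
  have "emeasure \<nu> (UNIV - I) = 0" using em\<nu>[of "UNIV - I"] assms(3) by auto
  then have sp: "supp \<nu> \<subseteq> I" by (rule supp_sub[OF assms(3)])
  have "\<bar>measure \<mu> J - measure \<nu> J\<bar> \<le> 1 - p" if J: "nondeg_interval J" for J
  proof -
    have Jb: "J \<in> sets borel" using J real_interval_borel_measurable unfolding nondeg_interval_def by blast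
    have split: "measure \<mu> J = measure \<mu> (I \<inter> J) + measure \<mu> (J - I)"
    proof -
      have "J = (I \<inter> J) \<union> (J - I)" by blast
      then have "measure \<mu> J = measure \<mu> ((I \<inter> J) \<union> (J - I))" by simp
      also have "\<dots> = measure \<mu> (I \<inter> J) + measure \<mu> (J - I)"
        using Jb Is smu by (intro finite_measure_Union) auto
      finally show ?thesis .
    qed
    have x1: "measure \<mu> (I \<inter> J) \<le> p" unfolding p_def using Is by (intro finite_measure_mono) auto
    have "measure \<mu> (J - I) \<le> measure \<mu> (UNIV - I)" by (intro finite_measure_mono) (use Is spc sets.compl_sets[OF Is] in auto)
    also have "\<dots> = 1 - p" unfolding p_def using prob_compl[OF Is] spc by simp
    finally have y1: "measure \<mu> (J - I) \<le> 1 - p" .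
    show ?thesis unfolding split me\<nu>[OF Jb]
      by (rule real_ineq) (use x1 y1 p0 in auto)
  qed
  then have "d_Ku \<mu> \<nu> \<le> 1 - measure \<mu> I" unfolding p_def by (rule dku_le)
  then show ?thesis using pc pac sp by auto
qed


lemma lower:
  assumes "prob_space \<nu>" "sets \<nu> = sets borel" "supp \<nu> \<subseteq> I" "nondeg_interval I" "closed I"
    "prob_space \<mu>"
  shows "1 - measure \<mu> I \<le> d_Ku \<mu> \<nu>"
proof -
  have spc: "space \<nu> = UNIV" using sets_eq_imp_space_eq[OF assms(2)] by simp
  have Is: "I \<in> sets \<nu>" using assms(2,5) by auto
  have "emeasure \<nu> (UNIV - I) \<le> emeasure \<nu> (UNIV - supp \<nu>)"
  proof (rule emeasure_mono)
    have "closed (supp \<nu>)" unfolding supp_def by (intro closed_Inter) auto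
    then show "UNIV - supp \<nu> \<in> sets \<nu>" using assms(2) by auto
  qed (use assms(3) in auto)
  then have "emeasure \<nu> (UNIV - I) = 0" using supp_null[OF assms(2)] by simp
  then have "measure \<nu> (UNIV - I) = 0" by (simp add: measure_def)
  then have m1: "measure \<nu> I = 1" using prob_space.prob_compl[OF assms(1) Is] spc by simp
  have "\<bar>measure \<mu> I - measure \<nu> I\<bar> \<le> d_Ku \<mu> \<nu>" using assms by (intro dku_ge) auto
  then show ?thesis using m1 prob_space.prob_le_1[OF assms(6)] by simp
qed

theorem lemma2p4:
  fixes I :: "real set" and \<mu> :: "real measure"
  assumes "nondeg_interval I" and "closed I"
    and "\<mu> \<in> Pc"
  shows "1 - measure \<mu> I = Inf {d_Ku \<mu> \<nu> | \<nu>. \<nu> \<in> Pc \<and> supp \<nu> \<subseteq> I}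
    \<and> (\<mu> \<in> Pac \<longrightarrow> 1 - measure \<mu> I = Inf {d_Ku \<mu> \<nu> | \<nu>. \<nu> \<in> Pac \<and> supp \<nu> \<subseteq> I})"
proof -
  have pmu: "prob_space \<mu>" using assms(3) unfolding Pc_def by auto
  obtain \<nu> where \<nu>: "\<mu> \<in> Pac \<longrightarrow> \<nu> \<in> Pac" "\<nu> \<in> Pc" "supp \<nu> \<subseteq> I" "d_Ku \<mu> \<nu> \<le> 1 - measure \<mu> I"
  proof (cases "measure \<mu> I = 0")
    case True
    then show ?thesis using case_zero[OF assms(1,3) True assms(2)] that by blast
  next
    case False
    then have "measure \<mu> I > 0" using measure_nonneg[of \<mu> I] by linarith
    then show ?thesis using case_pos[OF assms(3) _ assms(2)] that by blast
  qed
  have lowPc: "1 - measure \<mu> I \<le> x" if "x \<in> {d_Ku \<mu> \<nu> | \<nu>. \<nu> \<in> Pc \<and> supp \<nu> \<subseteq> I}" for x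
    using that lower[OF _ _ _ assms(1,2) pmu] unfolding Pc_def by auto
  have lowPac: "1 - measure \<mu> I \<le> x" if "x \<in> {d_Ku \<mu> \<nu> | \<nu>. \<nu> \<in> Pac \<and> supp \<nu> \<subseteq> I}" for x
    using that lower[OF _ _ _ assms(1,2) pmu] unfolding Pac_def by auto
  have eq: "d_Ku \<mu> \<nu> = 1 - measure \<mu> I"
    using \<nu>(4) lower[OF _ _ \<nu>(3) assms(1,2) pmu] \<nu>(2) unfolding Pc_def by force
  show ?thesis
  proof
    show "1 - measure \<mu> I = Inf {d_Ku \<mu> \<nu> | \<nu>. \<nu> \<in> Pc \<and> supp \<nu> \<subseteq> I}"
    proof (rule cInf_eq_minimum[symmetric])
      show "1 - measure \<mu> I \<in> {d_Ku \<mu> \<nu> | \<nu>. \<nu> \<in> Pc \<and> supp \<nu> \<subseteq> I}"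
        using eq \<nu>(2,3) by (intro CollectI exI[of _ \<nu>]) auto
    qed (rule lowPc)
    show "\<mu> \<in> Pac \<longrightarrow> 1 - measure \<mu> I = Inf {d_Ku \<mu> \<nu> | \<nu>. \<nu> \<in> Pac \<and> supp \<nu> \<subseteq> I}"
    proof
      assume "\<mu> \<in> Pac"
      then have "\<nu> \<in> Pac" using \<nu>(1) by simp
      show "1 - measure \<mu> I = Inf {d_Ku \<mu> \<nu> | \<nu>. \<nu> \<in> Pac \<and> supp \<nu> \<subseteq> I}"
      proof (rule cInf_eq_minimum[symmetric])
        show "1 - measure \<mu> I \<in> {d_Ku \<mu> \<nu> | \<nu>. \<nu> \<in> Pac \<and> supp \<nu> \<subseteq> I}"
          using eq \<nu>(3) \<open>\<nu> \<in> Pac\<close> by (intro CollectI exI[of _ \<nu>]) auto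
      qed (rule lowPac)
    qed
  qed
qed

end
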